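(* Let $f=\frac1n\sum_{i=1}^n f_i$ where each $f_i:\mathbb{R}^d\to\mathbb{R}$ is $L$-smooth, and assume moreover that either each $f_i$ is $\mu$-strongly convex for some $\mu>0$, or $\inf_x f(x)>-\infty$. Let the stepsize satisfy $\gamma\le\frac1{L(n+1)}$. Then the iterates of No Full Grad SARAH (described in the context) satisfy, for every epoch $s$, $$f(x_{s+1}^0)\le f(x_s^0)-\frac{\gamma(n+1)}{2}\|\nabla f(x_s^0)\|^2+\frac{\gamma(n+1)}{2}\Big\|\nabla f(x_s^0)-\frac1{n+1}\sum_{t=0}^{n}v_s^t\Big\|^2.$$
   Context: No Full Grad SARAH: input $x_0^0\in\mathbb{R}^d$, $v_0=0$, stepsize $\gamma>0$. For epochs $s=0,1,\dots$: choose a permutation $\pi_s^1,\dots,\pi_s^n$ of $\{1,\dots,n\}$ (by any shuffling rule); set $\tilde v_s^1=0$, $v_s^0=v_s$, $x_s^1=x_s^0-\gamma v_s^0$; for $t=1,\dots,n$ set $\tilde v_s^{t+1}=\frac{t-1}{t}\tilde v_s^t+\frac1t\nabla f_{\pi_s^t}(x_s^t)$, $v_s^t=\frac1n\big(\nabla f_{\pi_s^t}(x_s^t)-\nabla f_{\pi_s^t}(x_s^{t-1})\big)+v_s^{t-1}$, $x_s^{t+1}=x_s^t-\gamma v_s^t$; then $x_{s+1}^0=x_s^{n+1}$, $v_{s+1}=\tilde v_s^{n+1}$. *)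

theory Defs
  imports "HOL-Analysis.Analysis"
begin

definition L_smooth :: "real \<Rightarrow> ('a::euclidean_space \<Rightarrow> real) \<Rightarrow> ('a \<Rightarrow> 'a) \<Rightarrow> bool" where
  "L_smooth L f g \<longleftrightarrow>
     (\<forall>x. (f has_derivative (\<lambda>h. g x \<bullet> h)) (at x)) \<and>
     (\<forall>x y. norm (g x - g y) \<le> L * norm (x - y))"

definition strongly_convex :: "real \<Rightarrow> ('a::euclidean_space \<Rightarrow> real) \<Rightarrow> bool" where
  "strongly_convex \<mu> f \<longleftrightarrow> convex_on UNIV (\<lambda>x. f x - \<mu> / 2 * (norm x)\<^sup>2)"

end

theory Submission
  imports Defs
begin

lemma descent1:
  fixes f :: "'a::euclidean_space \<Rightarrow> real"
  assumes "L_smooth L f g"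
  shows "f y \<le> f x + g x \<bullet> (y - x) + L / 2 * (norm (y - x))\<^sup>2"
proof -
  define d where "d = y - x"
  have der: "\<And>z. (f has_derivative (\<lambda>h. g z \<bullet> h)) (at z)"
    and lip: "\<And>a b. norm (g a - g b) \<le> L * norm (a - b)"
    using assms unfolding L_smooth_def by auto
  define \<phi> where "\<phi> t = f (x + t *\<^sub>R d) - t * (g x \<bullet> d) - L / 2 * t\<^sup>2 * (norm d)\<^sup>2" for t
  have D: "(\<phi> has_real_derivative ((g (x + t *\<^sub>R d) - g x) \<bullet> d - L * t * (norm d)\<^sup>2)) (at t)" for t
  proof -
    have l: "((\<lambda>t. x + t *\<^sub>R d) has_derivative (\<lambda>s. s *\<^sub>R d)) (at t)"
      by (auto intro!: derivative_eq_intros)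
    have c: "((\<lambda>t. f (x + t *\<^sub>R d)) has_derivative (\<lambda>s. g (x + t *\<^sub>R d) \<bullet> (s *\<^sub>R d))) (at t)"
      using diff_chain_at[OF l der[of "x + t *\<^sub>R d"]] by (simp add: o_def)
    have c': "((\<lambda>t. f (x + t *\<^sub>R d)) has_real_derivative (g (x + t *\<^sub>R d) \<bullet> d)) (at t)"
      unfolding has_field_derivative_def using c by (simp add: mult.commute[of _ "g (x + t *\<^sub>R d) \<bullet> d"])
    show ?thesis unfolding \<phi>_def
      by (rule derivative_eq_intros c' | simp)+ (simp add: inner_diff_left algebra_simps)
  qed
  have nonpos: "(g (x + t *\<^sub>R d) - g x) \<bullet> d - L * t * (norm d)\<^sup>2 \<le> 0" if "0 \<le> t" for t
  proof -
    have "(g (x + t *\<^sub>R d) - g x) \<bullet> d \<le> norm (g (x + t *\<^sub>R d) - g x) * norm d"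
      by (rule norm_cauchy_schwarz)
    also have "\<dots> \<le> L * norm (t *\<^sub>R d) * norm d"
      using lip[of "x + t *\<^sub>R d" x] by (simp add: mult_right_mono)
    also have "\<dots> = L * t * (norm d)\<^sup>2" using that by (simp add: power2_eq_square)
    finally show ?thesis by simp
  qed
  have "\<phi> 1 \<le> \<phi> 0"
  proof (rule DERIV_nonpos_imp_nonincreasing[of 0 1])
    fix t :: real assume "0 \<le> t" "t \<le> 1"
    then show "\<exists>y. DERIV \<phi> t :> y \<and> y \<le> 0" using D[of t] nonpos[of t] by blast
  qed simp
  then show ?thesis unfolding \<phi>_def d_def by simp
qed

theorem lemma8:
  fixes n :: nat and L \<gamma> :: real
    and fs :: "nat \<Rightarrow> 'a::euclidean_space \<Rightarrow> real"
    and g :: "nat \<Rightarrow> 'a \<Rightarrow> 'a"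
    and \<pi> :: "nat \<Rightarrow> nat \<Rightarrow> nat"
    and x v vt :: "nat \<Rightarrow> nat \<Rightarrow> 'a"
  defines "F \<equiv> (\<lambda>y. (1 / real n) * (\<Sum>i=1..n. fs i y))"
    and "gradF \<equiv> (\<lambda>y. (1 / real n) *\<^sub>R (\<Sum>i=1..n. g i y))"
  assumes n_pos: "n \<ge> 1"
    and smooth: "\<And>i. i \<in> {1..n} \<Longrightarrow> L_smooth L (fs i) (g i)"
    and extra: "(\<exists>\<mu>>0. \<forall>i\<in>{1..n}. strongly_convex \<mu> (fs i)) \<or> bdd_below (range F)"
    and gamma_pos: "\<gamma> > 0"
    and gamma_le: "\<gamma> \<le> 1 / (L * real (n + 1))"
    and perm: "\<And>s. bij_betw (\<pi> s) {1..n} {1..n}"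
    and v_init: "v 0 0 = 0"
    and vt_1: "\<And>s. vt s 1 = 0"
    and x_1: "\<And>s. x s 1 = x s 0 - \<gamma> *\<^sub>R v s 0"
    and vt_step: "\<And>s t. t \<in> {1..n} \<Longrightarrow>
        vt s (t + 1) = ((real t - 1) / real t) *\<^sub>R vt s t + (1 / real t) *\<^sub>R g (\<pi> s t) (x s t)"
    and v_step: "\<And>s t. t \<in> {1..n} \<Longrightarrow>
        v s t = (1 / real n) *\<^sub>R (g (\<pi> s t) (x s t) - g (\<pi> s t) (x s (t - 1))) + v s (t - 1)"
    and x_step: "\<And>s t. t \<in> {1..n} \<Longrightarrow> x s (t + 1) = x s t - \<gamma> *\<^sub>R v s t"
    and x_next: "\<And>s. x (s + 1) 0 = x s (n + 1)"
    and v_next: "\<And>s. v (s + 1) 0 = vt s (n + 1)"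
  shows "F (x (s + 1) 0) \<le> F (x s 0) - \<gamma> * real (n + 1) / 2 * (norm (gradF (x s 0)))\<^sup>2
           + \<gamma> * real (n + 1) / 2 *
             (norm (gradF (x s 0) - (1 / real (n + 1)) *\<^sub>R (\<Sum>t=0..n. v s t)))\<^sup>2"
proof -
  have xs: "k \<le> n \<Longrightarrow> x s (k + 1) = x s 0 - \<gamma> *\<^sub>R (\<Sum>t=0..k. v s t)" for k
  proof (induction k)
    case 0 then show ?case using x_1 by simp
  next
    case (Suc k)
    have "x s (Suc k + 1) = x s (k + 1) - \<gamma> *\<^sub>R v s (Suc k)"
      using x_step[of "Suc k" s] Suc.prems by simp
    moreover have "x s (k + 1) = x s 0 - \<gamma> *\<^sub>R (\<Sum>t=0..k. v s t)" using Suc by simp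
    ultimately show ?case by (simp add: scaleR_right_distrib)
  qed
  define c where "c = \<gamma> * real (n + 1)"
  define w where "w = (1 / real (n + 1)) *\<^sub>R (\<Sum>t=0..n. v s t)"
  define a where "a = gradF (x s 0)"
  define y where "y = x (s + 1) 0"
  define z where "z = x s 0"
  have ydiff: "y - z = - c *\<^sub>R w"
    using xs[of n] x_next[of s] unfolding y_def z_def c_def w_def by simp
  have Lpos: "L > 0"
  proof (rule ccontr)
    assume "\<not> L > 0"
    then have "L * real (n + 1) \<le> 0"
      by (simp add: mult_nonpos_nonneg)
    then have "1 / (L * real (n + 1)) \<le> 0"
      by (intro divide_nonneg_nonpos) auto
    then show False using gamma_pos gamma_le by linarith
  qed
  have Lc: "L * c \<le> 1"
  proof -
    have "L * real (n + 1) > 0" using Lpos by simp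
    then have "\<gamma> * (L * real (n + 1)) \<le> 1" using gamma_le by (simp add: pos_le_divide_eq)
    then show ?thesis unfolding c_def by (simp add: algebra_simps)
  qed
  have cpos: "c > 0" unfolding c_def using gamma_pos by simp
  have each: "fs i y \<le> fs i z + g i z \<bullet> (y - z) + L / 2 * (norm (y - z))\<^sup>2" if "i \<in> {1..n}" for i
    using descent1[OF smooth[OF that]] .
  have "(\<Sum>i=1..n. fs i y) \<le> (\<Sum>i=1..n. fs i z + g i z \<bullet> (y - z) + L / 2 * (norm (y - z))\<^sup>2)"
    by (rule sum_mono) (use each in auto)
  also have "\<dots> = (\<Sum>i=1..n. fs i z) + (\<Sum>i=1..n. g i z) \<bullet> (y - z) + real n * (L / 2 * (norm (y - z))\<^sup>2)"
    by (simp add: sum.distrib inner_sum_left)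
  finally have "(1 / real n) * (\<Sum>i=1..n. fs i y) \<le> (1 / real n) * ((\<Sum>i=1..n. fs i z) + (\<Sum>i=1..n. g i z) \<bullet> (y - z) + real n * (L / 2 * (norm (y - z))\<^sup>2))"
    using n_pos by (intro mult_left_mono) auto
  also have "\<dots> = F z + a \<bullet> (y - z) + L / 2 * (norm (y - z))\<^sup>2"
    unfolding F_def a_def gradF_def z_def using n_pos by (simp add: field_simps)
  finally have desc: "F y \<le> F z + a \<bullet> (y - z) + L / 2 * (norm (y - z))\<^sup>2"
    unfolding F_def by simp
  have "a \<bullet> (y - z) + L / 2 * (norm (y - z))\<^sup>2 = - c * (a \<bullet> w) + L * c * c / 2 * (norm w)\<^sup>2"
    unfolding ydiff by (simp add: power2_eq_square)
  also have "\<dots> \<le> - c * (a \<bullet> w) + c / 2 * (norm w)\<^sup>2"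
  proof -
    have "L * c * c / 2 * (norm w)\<^sup>2 \<le> 1 * c / 2 * (norm w)\<^sup>2"
      using Lc cpos by (intro mult_right_mono divide_right_mono mult_right_mono) auto
    then show ?thesis by simp
  qed
  also have "\<dots> = - c / 2 * (norm a)\<^sup>2 + c / 2 * (norm (a - w))\<^sup>2"
    by (simp add: power2_norm_eq_inner inner_diff_left inner_diff_right inner_commute algebra_simps)
  finally show ?thesis using desc unfolding y_def z_def a_def w_def c_def by simp
qed

end
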